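(* Let $P^0\in\Delta^{n-1}_+$ and let $J$ be a set of pairs $(i,j)$ of indices with $1\le j<i\le n$. Assume that $\frac{p^0_j}{p^*_j}-\frac{p^0_i}{p^*_i}\neq 0$ for every $(i,j)\in J$. Then there exists a neighbourhood $U$ of $P^0$ in $\mathbb{R}^n$ such that $$\bigl(P^0+\mathbf{Q}_J(P^0,P^* )\bigr)\cap U=\Phi_J(P^0)\cap U .$$
   Context: Fix $n\ge 2$ and a positive equilibrium distribution $P^*=(p^*_i)$, $p^*_i>0$, $\sum_i p^*_i=1$. Let $\Delta^{n-1}_+=\{P=(p_i)\in\mathbb{R}^n: p_i>0,\ \sum_i p_i=1\}$. For $i\neq j$ let $\gamma^{ji}\in\mathbb{R}^n$ be the vector with $\gamma^{ji}_j=-1$, $\gamma^{ji}_i=1$ and all other coordinates $0$. For a finite set of vectors, ${\rm cone}$ denotes the set of all their linear combinations with non-negative coefficients; ${\rm sign}$ is the three-valued sign function (values $-1,0,1$). For a set $J$ of pairs $(i,j)$ with $i>j$: $$\mathbf{Q}_J(P,P^* )={\rm cone}\Bigl\{\gamma^{ji}\,{\rm sign}\Bigl(\tfrac{p_j}{p^*_j}-\tfrac{p_i}{p^*_i}\Bigr)\ :\ (i,j)\in J\Bigr\}.$$ $\mathcal{K}_J$ is the class of all ODE systems $$\frac{dP}{dt}=\sum_{(i,j)\in J} w^*_{ij}\Bigl(\frac{p_j}{p^*_j}-\frac{p_i}{p^*_i}\Bigr)\gamma^{ji}$$ with arbitrary constants $w^*_{ij}\ge 0$ (these are the Kolmogorov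 equations of reversible Markov chains with detailed balance, equilibrium $P^*$, and transitions $A_i\rightleftharpoons A_j$ only for $(i,j)\in J$). $\Phi_J(P^0)$ is the set of all values $P(t)$, $t>0$, of solutions $P(t)$ with $P(0)=P^0$ of all systems in $\mathcal{K}_J$. *)

theory Defs
  imports "HOL-Analysis.Analysis"
begin

text \<open>Vectors in R^n are modelled as real^'n for a finite, linearly ordered index type 'n
  (the order is used for the convention i > j on pairs).\<close>

definition gam :: "'n::finite \<Rightarrow> 'n \<Rightarrow> real^'n" where
  "gam j i = (\<chi> k. if k = i then 1 else if k = j then -1 else 0)"

definition simplex_pos :: "(real^'n::finite) set" where
  "simplex_pos = {P. (\<forall>i. P $ i > 0) \<and> (\<Sum>i\<in>UNIV. P $ i) = 1}"

definition QJ :: "('n::finite \<times> 'n) set \<Rightarrow> real^'n \<Rightarrow> real^'n \<Rightarrow> (real^'n) set" where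
  "QJ J P Ps = {(\<Sum>(i,j)\<in>J. c (i,j) *\<^sub>R (sgn (P$j / Ps$j - P$i / Ps$i) *\<^sub>R gam j i)) | c.
                 \<forall>p\<in>J. c p \<ge> 0}"

definition kolm_rhs :: "('n::finite \<times> 'n) set \<Rightarrow> ('n \<times> 'n \<Rightarrow> real) \<Rightarrow> real^'n \<Rightarrow> real^'n \<Rightarrow> real^'n" where
  "kolm_rhs J w Ps P = (\<Sum>(i,j)\<in>J. (w (i,j) * (P$j / Ps$j - P$i / Ps$i)) *\<^sub>R gam j i)"

definition PhiJ :: "('n::finite \<times> 'n) set \<Rightarrow> real^'n \<Rightarrow> real^'n \<Rightarrow> (real^'n) set" where
  "PhiJ J Ps P0 = {x. \<exists>w Pt t. (\<forall>p\<in>J. w p \<ge> 0) \<and> t > 0 \<and> Pt 0 = P0 \<and>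
      (\<forall>s\<ge>0. (Pt has_vector_derivative kolm_rhs J w Ps (Pt s)) (at s within {0..})) \<and>
      x = Pt t}"

end

theory Submission
  imports Defs
begin


lemma vec_expand: "(\<Sum>c\<in>UNIV. (X$c) *\<^sub>R axis c (1::real)) = (X::real^'n)"
proof -
  have "(\<Sum>c\<in>UNIV. X $ c * (if i = c then 1 else 0)) = X $ i" for i
  proof -
    have "(\<Sum>c\<in>UNIV. X $ c * (if i = c then 1 else 0)) = (\<Sum>c\<in>UNIV. (if i = c then X $ c else 0))"
      by (rule sum.cong) auto
    then show ?thesis by simp
  qed
  then show ?thesis by (simp add: vec_eq_iff axis_def)
qed

lemma linear_comp_expand:
  assumes "linear (f::real^'n \<Rightarrow> real^'n)"
  shows "f X $ i = (\<Sum>c\<in>UNIV. X$c * (f (axis c 1) $ i))"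
proof -
  have "f X = f (\<Sum>c\<in>UNIV. (X$c) *\<^sub>R axis c (1::real))" by (simp only: vec_expand)
  also have "\<dots> = (\<Sum>c\<in>UNIV. (X$c) *\<^sub>R f (axis c 1))"
    using assms by (simp add: linear_sum linear_scale)
  finally have "f X $ i = (\<Sum>c\<in>UNIV. (X$c) *\<^sub>R f (axis c 1)) $ i" by simp
  then show ?thesis by (simp only: sum_component vector_scaleR_component real_scaleR_def)
qed

lemma lin_suminf:
  assumes "linear (f::real^'n \<Rightarrow> real^'n)" and "\<And>c. summable (\<lambda>n. g n c)"
  shows "f (\<chi> c. \<Sum>n. g n c) $ i = (\<Sum>n. f (\<chi> c. g n c) $ i)"
proof -
  have "f (\<chi> c. \<Sum>n. g n c) $ i = (\<Sum>c\<in>UNIV. (\<Sum>n. g n c) * (f (axis c 1) $ i))"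
    using linear_comp_expand[OF assms(1), of "\<chi> c. \<Sum>n. g n c" i] by (simp only: vec_lambda_beta)
  also have "\<dots> = (\<Sum>c\<in>UNIV. \<Sum>n. g n c * (f (axis c 1) $ i))"
    using assms(2) by (simp add: suminf_mult2)
  also have "\<dots> = (\<Sum>n. \<Sum>c\<in>UNIV. g n c * (f (axis c 1) $ i))"
    by (rule suminf_sum[symmetric]) (intro summable_mult2 assms(2))
  also have "\<dots> = (\<Sum>n. f (\<chi> c. g n c) $ i)"
  proof -
    have "(\<Sum>c\<in>UNIV. g n c * (f (axis c 1) $ i)) = f (\<chi> c. g n c) $ i" for n
      using linear_comp_expand[OF assms(1), of "\<chi> c. g n c" i] by (simp only: vec_lambda_beta)
    then show ?thesis by simp
  qed
  finally show ?thesis .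
qed

lemma iter_bound:
  fixes f :: "real^'n \<Rightarrow> real^'n"
  assumes "\<And>x. norm (f x) \<le> C * norm x" "0 \<le> C"
  shows "norm ((f ^^ n) x) \<le> C ^ n * norm x"
proof (induction n)
  case 0 then show ?case by (simp add: funpow_0)
next
  case (Suc n)
  have "norm ((f ^^ Suc n) x) = norm (f ((f ^^ n) x))" by simp
  also have "\<dots> \<le> C * norm ((f ^^ n) x)" by (rule assms(1))
  also have "\<dots> \<le> C * (C ^ n * norm x)" by (rule mult_left_mono[OF Suc assms(2)])
  also have "\<dots> = C ^ Suc n * norm x" by (simp only: power_Suc mult.assoc)
  finally show ?case .
qed

definition expv :: "(real^'n \<Rightarrow> real^'n) \<Rightarrow> real^'n \<Rightarrow> real \<Rightarrow> real^'n" where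
  "expv f x0 s = (\<chi> i. \<Sum>n. ((f ^^ n) x0 $ i / fact n) * s ^ n)"

definition Yv :: "(real^'n \<Rightarrow> real^'n) \<Rightarrow> real^'n \<Rightarrow> real^'n" where
  "Yv f x0 = (\<chi> i. \<Sum>n. (f ^^ n) x0 $ i / fact (Suc n))"

lemma summ_exp_bound:
  fixes a :: "nat \<Rightarrow> real" and s C B :: real
  assumes "\<And>n. \<bar>a n\<bar> \<le> C ^ n * B" "0 \<le> C"
  shows "summable (\<lambda>n. (a n / fact n) * s ^ n)"
proof (rule summable_comparison_test)
  show "\<exists>N. \<forall>n\<ge>N. norm (a n / fact n * s ^ n) \<le> B * (inverse (fact n) * (C * \<bar>s\<bar>) ^ n)"
  proof (intro exI allI impI)
    fix n
    have "norm (a n / fact n * s ^ n) = \<bar>a n\<bar> * (inverse (fact n) * \<bar>s\<bar> ^ n)"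
      by (simp add: abs_mult power_abs divide_inverse)
    also have "\<dots> \<le> (C ^ n * B) * (inverse (fact n) * \<bar>s\<bar> ^ n)"
      by (rule mult_right_mono[OF assms(1)]) simp
    also have "\<dots> = B * (inverse (fact n) * (C * \<bar>s\<bar>) ^ n)"
      by (simp add: power_mult_distrib)
    finally show "norm (a n / fact n * s ^ n) \<le> B * (inverse (fact n) * (C * \<bar>s\<bar>) ^ n)" .
  qed
  show "summable (\<lambda>n. B * (inverse (fact n) * (C * \<bar>s\<bar>) ^ n))"
    by (intro summable_mult summable_exp)
qed

lemma summ_iter:
  fixes s :: real and f :: "real^'n \<Rightarrow> real^'n"
  assumes "\<And>x. norm (f x) \<le> C * norm x" "0 \<le> C"
  shows "summable (\<lambda>n. ((f ^^ n) x0 $ i / fact n) * s ^ n)"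
proof (rule summ_exp_bound[OF _ assms(2)])
  fix n
  show "\<bar>(f ^^ n) x0 $ i\<bar> \<le> C ^ n * norm x0"
    by (rule order_trans[OF component_le_norm_cart[of "(f ^^ n) x0" i] iter_bound[OF assms]])
qed

lemma summ_iter1:
  fixes f :: "real^'n \<Rightarrow> real^'n"
  assumes "\<And>x. norm (f x) \<le> C * norm x" "0 \<le> C"
  shows "summable (\<lambda>n. (f ^^ n) x0 $ i / fact (Suc n))"
proof (rule summable_comparison_test)
  show "\<exists>N. \<forall>n\<ge>N. norm ((f ^^ n) x0 $ i / fact (Suc n)) \<le> norm x0 * (inverse (fact n) * C ^ n)"
  proof (intro exI allI impI)
    fix n
    have f1: "fact n \<le> (fact (Suc n) :: real)" by (rule fact_mono) simp
    have f2: "0 < (fact (Suc n) :: real) * fact n" by (simp only: fact_gt_zero mult_pos_pos)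
    note dl = divide_left_mono[OF f1 abs_ge_zero f2, of "(f ^^ n) x0 $ i"]
    have "norm ((f ^^ n) x0 $ i / fact (Suc n)) = \<bar>(f ^^ n) x0 $ i\<bar> / fact (Suc n)"
      by (simp add: abs_divide)
    also have "\<dots> \<le> \<bar>(f ^^ n) x0 $ i\<bar> / fact n"
      by (rule dl)
    also have "\<dots> \<le> (C ^ n * norm x0) / fact n"
      by (rule divide_right_mono) (use component_le_norm_cart[of "(f ^^ n) x0" i] iter_bound[OF assms, of n x0] in auto)
    also have "\<dots> = norm x0 * (inverse (fact n) * C ^ n)" by (simp add: divide_inverse)
    finally show "norm ((f ^^ n) x0 $ i / fact (Suc n)) \<le> norm x0 * (inverse (fact n) * C ^ n)" .
  qed
  show "summable (\<lambda>n. norm x0 * (inverse (fact n) * C ^ n))"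
    by (intro summable_mult summable_exp)
qed

lemma expv_0: "expv f x0 0 = x0"
proof -
  have h: "(\<Sum>n. ((f ^^ n) x0 $ i / fact n) * (0::real) ^ n) = x0 $ i" for i
  proof -
    have "(\<Sum>n. ((f ^^ n) x0 $ i / fact n) * (0::real) ^ n) = (f ^^ 0) x0 $ i / fact 0"
      by (rule powser_zero)
    also have "\<dots> = x0 $ i" by simp
    finally show ?thesis .
  qed
  show ?thesis unfolding expv_def vec_eq_iff vec_lambda_beta by (intro allI h)
qed

lemma expv_deriv:
  fixes f :: "real^'n \<Rightarrow> real^'n" and s :: real
  assumes lin: "linear f" and b: "\<And>x. norm (f x) \<le> C * norm x" "0 \<le> C"
  shows "(expv f x0 has_vector_derivative f (expv f x0 s)) (at s within S)"
proof -
  define E where "E i s = (\<Sum>n. ((f ^^ n) x0 $ i / fact n) * s ^ n)" for i s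
  have eq: "expv f x0 = (\<lambda>s. \<Sum>i\<in>UNIV. E i s *\<^sub>R axis i (1::real))"
  proof (rule ext)
    fix s
    show "expv f x0 s = (\<Sum>i\<in>UNIV. E i s *\<^sub>R axis i (1::real))"
      using vec_expand[of "\<chi> i. E i s"] by (simp add: expv_def E_def)
  qed
  have dE: "(E i has_field_derivative (\<Sum>n. (f ((f ^^ n) x0) $ i / fact n) * s ^ n)) (at s)" for i
  proof -
    have "(E i has_field_derivative (\<Sum>n. diffs (\<lambda>n. (f ^^ n) x0 $ i / fact n) n * s ^ n)) (at s)"
      unfolding E_def by (rule termdiffs_strong_converges_everywhere) (rule summ_iter[OF b])
    moreover have "diffs (\<lambda>n. (f ^^ n) x0 $ i / fact n) n = f ((f ^^ n) x0) $ i / fact n" for n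
      by (simp add: diffs_def fact_Suc divide_simps del: of_nat_Suc)
    ultimately show ?thesis by simp
  qed
  have val: "(\<Sum>n. (f ((f ^^ n) x0) $ i / fact n) * s ^ n) = f (expv f x0 s) $ i" for i
  proof -
    have "f (expv f x0 s) $ i = (\<Sum>n. f (\<chi> c. ((f ^^ n) x0 $ c / fact n) * s ^ n) $ i)"
      unfolding expv_def by (rule lin_suminf[OF lin]) (rule summ_iter[OF b])
    also have "\<dots> = (\<Sum>n. (f ((f ^^ n) x0) $ i / fact n) * s ^ n)"
    proof -
      have "(\<chi> c. ((f ^^ n) x0 $ c / fact n) * s ^ n) = (s ^ n / fact n) *\<^sub>R (f ^^ n) x0" for n
        by (simp add: vec_eq_iff)
      then show ?thesis using lin by (simp add: linear_scale mult.commute)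
    qed
    finally show ?thesis by simp
  qed
  have "((\<lambda>s. \<Sum>i\<in>UNIV. E i s *\<^sub>R axis i (1::real)) has_vector_derivative
          (\<Sum>i\<in>UNIV. (f (expv f x0 s) $ i) *\<^sub>R axis i 1)) (at s within S)"
  proof (rule has_vector_derivative_sum)
    fix i :: 'n
    have d1: "(E i has_field_derivative f (expv f x0 s) $ i) (at s within S)"
      using dE[of i] val[of i] by (simp add: has_field_derivative_at_within)
    have "((\<lambda>s. E i s *\<^sub>R axis i (1::real)) has_vector_derivative
             E i s *\<^sub>R 0 + (f (expv f x0 s) $ i) *\<^sub>R axis i 1) (at s within S)"
      by (rule has_vector_derivative_scaleR[OF d1 has_vector_derivative_const])
    then show "((\<lambda>s. E i s *\<^sub>R axis i (1::real)) has_vector_derivative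
             (f (expv f x0 s) $ i) *\<^sub>R axis i 1) (at s within S)" by simp
  qed
  then show ?thesis unfolding eq by (simp only: vec_expand)
qed



lemma term_bound:
  fixes f :: "real^'n \<Rightarrow> real^'n"
  assumes "\<And>x. norm (f x) \<le> C * norm x" "0 \<le> C"
  shows "norm ((f ^^ n) x0 $ i / fact (Suc n)) \<le> norm x0 * (inverse (fact n) * C ^ n)"
proof -
  have f1: "fact n \<le> (fact (Suc n) :: real)" by (rule fact_mono) simp
  have f2: "0 < (fact (Suc n) :: real) * fact n" by (simp only: fact_gt_zero mult_pos_pos)
  note dl = divide_left_mono[OF f1 abs_ge_zero f2, of "(f ^^ n) x0 $ i"]
  have "norm ((f ^^ n) x0 $ i / fact (Suc n)) = \<bar>(f ^^ n) x0 $ i\<bar> / fact (Suc n)"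
    by (simp add: abs_divide)
  also have "\<dots> \<le> \<bar>(f ^^ n) x0 $ i\<bar> / fact n"
    by (rule dl)
  also have "\<dots> \<le> (C ^ n * norm x0) / fact n"
    by (rule divide_right_mono[OF order_trans[OF component_le_norm_cart[of "(f ^^ n) x0" i] iter_bound[OF assms]]]) simp
  also have "\<dots> = norm x0 * (inverse (fact n) * C ^ n)" by (simp add: divide_inverse)
  finally show ?thesis .
qed

lemma expv_1:
  fixes f :: "real^'n \<Rightarrow> real^'n"
  assumes lin: "linear f" and b: "\<And>x. norm (f x) \<le> C * norm x" "0 \<le> C"
  shows "expv f x0 1 = x0 + f (Yv f x0)"
proof -
  have "expv f x0 1 $ i = x0 $ i + f (Yv f x0) $ i" for i
  proof -
    define F where "F = (\<lambda>n. ((f ^^ n) x0 $ i / fact n) * (1::real) ^ n)"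
    have sF: "summable F" unfolding F_def by (rule summ_iter[OF b])
    have "expv f x0 1 $ i = suminf F" by (simp add: expv_def F_def)
    also have "\<dots> = F 0 + (\<Sum>n. F (Suc n))" using suminf_split_head[OF sF] by simp
    also have "F 0 = x0 $ i" by (simp add: F_def)
    also have "(\<Sum>n. F (Suc n)) = (\<Sum>n. f ((f ^^ n) x0) $ i / fact (Suc n))"
      by (simp add: F_def)
    also have "\<dots> = f (Yv f x0) $ i"
    proof -
      have "f (Yv f x0) $ i = (\<Sum>n. f (\<chi> c. (f ^^ n) x0 $ c / fact (Suc n)) $ i)"
        unfolding Yv_def by (rule lin_suminf[OF lin]) (rule summ_iter1[OF b])
      also have "\<dots> = (\<Sum>n. f ((f ^^ n) x0) $ i / fact (Suc n))"
      proof -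
        have "(\<chi> c. (f ^^ n) x0 $ c / fact (Suc n)) = (1 / fact (Suc n)) *\<^sub>R (f ^^ n) x0" for n
          by (simp add: vec_eq_iff)
        then show ?thesis using lin by (simp add: linear_scale)
      qed
      finally show ?thesis by simp
    qed
    finally show ?thesis .
  qed
  then show ?thesis by (simp add: vec_eq_iff)
qed

lemma iter_cont:
  fixes F :: "'v::topological_space \<Rightarrow> real^'n \<Rightarrow> real^'n"
  assumes cont: "\<And>g. continuous_on K g \<Longrightarrow> continuous_on K (\<lambda>v. F v (g v))"
  shows "continuous_on K (\<lambda>v. (F v ^^ n) x0)"
proof (induction n)
  case 0 then show ?case by (simp add: continuous_on_const)
next
  case (Suc n)
  then show ?case using cont[OF Suc] by simp
qed

lemma Yv_cont:
  fixes F :: "'v::topological_space \<Rightarrow> real^'n \<Rightarrow> real^'n"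
  assumes bnd: "\<And>v x. v \<in> K \<Longrightarrow> norm (F v x) \<le> C * norm x" and C: "0 \<le> C"
    and cont: "\<And>g. continuous_on K g \<Longrightarrow> continuous_on K (\<lambda>v. F v (g v))"
  shows "continuous_on K (\<lambda>v. Yv (F v) x0)"
  unfolding Yv_def
proof (rule continuous_on_vec_lambda)
  fix i
  have ul: "uniform_limit K (\<lambda>n v. \<Sum>k<n. (F v ^^ k) x0 $ i / fact (Suc k))
             (\<lambda>v. \<Sum>k. (F v ^^ k) x0 $ i / fact (Suc k)) sequentially"
  proof (rule Weierstrass_m_test)
    show "\<And>n v. v \<in> K \<Longrightarrow> norm ((F v ^^ n) x0 $ i / fact (Suc n)) \<le> norm x0 * (inverse (fact n) * C ^ n)"
      by (rule term_bound[OF bnd C])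
    show "summable (\<lambda>n. norm x0 * (inverse (fact n) * C ^ n))"
      by (intro summable_mult summable_exp)
  qed
  show "continuous_on K (\<lambda>v. \<Sum>k. (F v ^^ k) x0 $ i / fact (Suc k))"
  proof (rule uniform_limit_theorem[OF _ ul])
    show "\<forall>\<^sub>F n in sequentially. continuous_on K (\<lambda>v. \<Sum>k<n. (F v ^^ k) x0 $ i / fact (Suc k))"
      by (intro always_eventually allI continuous_on_sum continuous_on_divide continuous_on_const
           continuous_on_component iter_cont[OF cont]) (auto simp: fact_nonzero)
  qed simp
qed



lemma kolm_eq: "kolm_rhs J w Ps X = (\<Sum>e\<in>J. (w e * (X$snd e / Ps$snd e - X$fst e / Ps$fst e)) *\<^sub>R gam (snd e) (fst e))"
  unfolding kolm_rhs_def by (simp add: case_prod_beta)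

lemma kolm_linear: "linear (kolm_rhs J w (Ps::real^'n::finite))"
proof (rule linearI)
  fix X Y :: "real^'n" and c :: real
  have t: "(w e * ((X+Y)$snd e / Ps$snd e - (X+Y)$fst e / Ps$fst e)) *\<^sub>R gam (snd e) (fst e)
      = (w e * (X$snd e / Ps$snd e - X$fst e / Ps$fst e)) *\<^sub>R gam (snd e) (fst e)
        + (w e * (Y$snd e / Ps$snd e - Y$fst e / Ps$fst e)) *\<^sub>R gam (snd e) (fst e)" for e
  proof -
    have "w e * ((X+Y)$snd e / Ps$snd e - (X+Y)$fst e / Ps$fst e)
        = w e * (X$snd e / Ps$snd e - X$fst e / Ps$fst e) + w e * (Y$snd e / Ps$snd e - Y$fst e / Ps$fst e)"
      by (simp add: add_divide_distrib ring_distribs)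
    then show ?thesis by (simp only: scaleR_add_left)
  qed
  show "kolm_rhs J w Ps (X + Y) = kolm_rhs J w Ps X + kolm_rhs J w Ps Y"
    unfolding kolm_eq t by (rule sum.distrib)
  have t2: "(w e * ((c *\<^sub>R X)$snd e / Ps$snd e - (c *\<^sub>R X)$fst e / Ps$fst e)) *\<^sub>R gam (snd e) (fst e)
      = c *\<^sub>R ((w e * (X$snd e / Ps$snd e - X$fst e / Ps$fst e)) *\<^sub>R gam (snd e) (fst e))" for e
  proof -
    have "w e * ((c *\<^sub>R X)$snd e / Ps$snd e - (c *\<^sub>R X)$fst e / Ps$fst e) = c * (w e * (X$snd e / Ps$snd e - X$fst e / Ps$fst e))"
      by (simp add: right_diff_distrib mult.left_commute)
    then show ?thesis by simp
  qed
  show "kolm_rhs J w Ps (c *\<^sub>R X) = c *\<^sub>R kolm_rhs J w Ps X"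
    unfolding kolm_eq t2 by (rule scaleR_sum_right[symmetric])
qed

lemma comp_div_bound:
  fixes X Ps :: "real^'n"
  assumes "\<forall>k. Ps$k > 0"
  shows "\<bar>X$j / Ps$j\<bar> \<le> norm X * (\<Sum>k\<in>UNIV. 1 / Ps$k)"
proof -
  have "\<bar>X$j / Ps$j\<bar> = \<bar>X$j\<bar> * (1 / Ps$j)" using assms[rule_format, of j] by (simp add: abs_divide)
  also have "\<dots> \<le> norm X * (1 / Ps$j)"
    by (rule mult_right_mono[OF component_le_norm_cart]) (use assms[rule_format, of j] in auto)
  also have "\<dots> \<le> norm X * (\<Sum>k\<in>UNIV. 1 / Ps$k)"
    by (rule mult_left_mono[OF member_le_sum]) (use assms in \<open>auto simp: less_imp_le\<close>)
  finally show ?thesis .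
qed

lemma kolm_bound:
  fixes X Ps :: "real^'n::finite"
  assumes pos: "\<forall>k. Ps$k > 0" and wb: "\<forall>e\<in>J. \<bar>w e\<bar> \<le> \<beta>"
  shows "norm (kolm_rhs J w Ps X) \<le>
    (\<beta> * (2 * (\<Sum>k\<in>UNIV. 1 / Ps$k)) * (\<Sum>e\<in>J. norm (gam (snd e) (fst e :: 'n)))) * norm X"
proof -
  define S where "S = (\<Sum>k\<in>UNIV. 1 / Ps$k)"
  have "norm (kolm_rhs J w Ps X) \<le> (\<Sum>e\<in>J. norm ((w e * (X$snd e / Ps$snd e - X$fst e / Ps$fst e)) *\<^sub>R gam (snd e) (fst e)))"
    unfolding kolm_eq by (rule norm_sum)
  also have "\<dots> \<le> (\<Sum>e\<in>J. (\<beta> * (2 * S) * norm X) * norm (gam (snd e) (fst e)))"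
  proof (rule sum_mono)
    fix e assume e: "e \<in> J"
    have "\<bar>X$snd e / Ps$snd e - X$fst e / Ps$fst e\<bar> \<le> \<bar>X$snd e / Ps$snd e\<bar> + \<bar>X$fst e / Ps$fst e\<bar>"
      by (rule abs_triangle_ineq4)
    also have "\<dots> \<le> norm X * S + norm X * S"
      unfolding S_def by (rule add_mono[OF comp_div_bound[OF pos] comp_div_bound[OF pos]])
    also have "\<dots> = 2 * S * norm X" by simp
    finally have d: "\<bar>X$snd e / Ps$snd e - X$fst e / Ps$fst e\<bar> \<le> 2 * S * norm X" .
    have "\<bar>w e * (X$snd e / Ps$snd e - X$fst e / Ps$fst e)\<bar> \<le> \<beta> * (2 * S * norm X)"
      unfolding abs_mult by (rule mult_mono) (use wb e d in auto)
    then have "\<bar>w e * (X$snd e / Ps$snd e - X$fst e / Ps$fst e)\<bar> * norm (gam (snd e) (fst e))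
        \<le> (\<beta> * (2 * S * norm X)) * norm (gam (snd e) (fst e))"
      by (rule mult_right_mono) simp
    then show "norm ((w e * (X$snd e / Ps$snd e - X$fst e / Ps$fst e)) *\<^sub>R gam (snd e) (fst e))
        \<le> (\<beta> * (2 * S) * norm X) * norm (gam (snd e) (fst e))"
      by (simp add: mult.assoc)
  qed
  also have "\<dots> = (\<beta> * (2 * S) * (\<Sum>e\<in>J. norm (gam (snd e) (fst e :: 'n)))) * norm X"
    by (simp add: sum_distrib_left sum_distrib_right algebra_simps)
  finally show ?thesis unfolding S_def .
qed

lemma kolm_cont:
  fixes Ps :: "real^'n" and g :: "real^('n\<times>'n) \<Rightarrow> real^'n"
  assumes "continuous_on K g" and pos: "\<forall>k. Ps$k > 0"
  shows "continuous_on K (\<lambda>v. kolm_rhs J (\<lambda>p. v$p) Ps (g v))"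
  unfolding kolm_eq
  by (intro continuous_intros assms) (use pos in \<open>auto simp: less_imp_neq[symmetric]\<close>)



definition Dd :: "real^'n \<Rightarrow> 'n \<times> 'n \<Rightarrow> real^'n \<Rightarrow> real" where
  "Dd Ps e X = X$snd e / Ps$snd e - X$fst e / Ps$fst e"

definition Phi :: "real^'n \<Rightarrow> real^'n \<Rightarrow> real" where
  "Phi Ps X = (\<Sum>k\<in>UNIV. (X$k)^2 / Ps$k)"

lemma gam_comp: "gam j i $ k = (if k = i then 1 else if k = j then -1 else 0)"
  by (simp add: gam_def)

lemma sum_gam:
  fixes x :: "'n::finite \<Rightarrow> real"
  assumes "i \<noteq> j"
  shows "(\<Sum>k\<in>UNIV. x k * gam j i $ k) = x i - x j"
proof -
  have "(\<Sum>k\<in>UNIV. x k * gam j i $ k) = (\<Sum>k\<in>UNIV. (if k = i then x k else 0) - (if k = j then x k else 0))"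
    by (rule sum.cong) (use assms in \<open>auto simp: gam_comp\<close>)
  also have "\<dots> = x i - x j" by (simp add: sum_subtractf)
  finally show ?thesis .
qed

locale kin =
  fixes Ps P0 :: "real^'n::finite" and J :: "('n \<times> 'n) set"
  assumes pos: "\<forall>k. Ps$k > 0" and ne: "\<forall>e\<in>J. fst e \<noteq> snd e" and nz: "\<forall>e\<in>J. Dd Ps e P0 \<noteq> 0"
begin

definition sg where "sg e = sgn (Dd Ps e P0)"
definition dd where "dd e X = sg e * Dd Ps e X"
definition GG where "GG e = sg e *\<^sub>R gam (snd e) (fst e)"
definition S where "S = (\<Sum>k\<in>UNIV. 1 / Ps$k)"

lemma sg_sq: "e \<in> J \<Longrightarrow> sg e * sg e = 1"
  using nz unfolding sg_def by (auto simp: sgn_if)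

lemma dd_P0: "e \<in> J \<Longrightarrow> dd e P0 = \<bar>Dd Ps e P0\<bar>"
  unfolding dd_def sg_def by (simp add: sgn_if abs_if)

lemma kolm_GG: "kolm_rhs J w Ps X = (\<Sum>e\<in>J. (w e * dd e X) *\<^sub>R GG e)"
  unfolding kolm_eq
proof (rule sum.cong[OF refl])
  fix e assume e: "e \<in> J"
  have "w e * (X$snd e / Ps$snd e - X$fst e / Ps$fst e) = (w e * dd e X) * sg e"
    using sg_sq[OF e] by (simp add: dd_def Dd_def)
  then show "(w e * (X$snd e / Ps$snd e - X$fst e / Ps$fst e)) *\<^sub>R gam (snd e) (fst e) = (w e * dd e X) *\<^sub>R GG e"
    by (simp add: GG_def)
qed

lemma QJ_GG: "QJ J P0 Ps = {(\<Sum>e\<in>J. c e *\<^sub>R GG e) | c. \<forall>p\<in>J. c p \<ge> 0}"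
  unfolding QJ_def GG_def sg_def Dd_def by (simp add: case_prod_beta)

lemma dd_lin: "dd e (X + Y) = dd e X + dd e Y" "dd e (c *\<^sub>R X) = c * dd e X"
  "dd e (\<Sum>f\<in>F. Z f) = (\<Sum>f\<in>F. dd e (Z f))"
proof -
  show "dd e (X + Y) = dd e X + dd e Y"
    by (simp add: dd_def Dd_def add_divide_distrib algebra_simps)
  show "dd e (c *\<^sub>R X) = c * dd e X"
    by (simp add: dd_def Dd_def algebra_simps)
  have "(\<Sum>f\<in>F. Z f)$snd e/Ps$snd e - (\<Sum> f\<in>F. Z f)$fst e/Ps$fst e = (\<Sum>f\<in>F. Z f$snd e/Ps$snd e - Z f$fst e/Ps$fst e)"
    by (simp add: sum_component sum_divide_distrib sum_subtractf)
  then show "dd e (\<Sum>f\<in>F. Z f) = (\<Sum>f\<in>F. dd e (Z f))"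
    by (simp add: dd_def Dd_def sum_distrib_left)
qed

lemma sg_abs: "\<bar>sg e\<bar> \<le> 1"
  unfolding sg_def by (simp add: sgn_if)

lemma inv_le_S: "1 / Ps$k \<le> S"
  unfolding S_def by (rule member_le_sum) (use pos in \<open>auto simp: less_imp_le\<close>)

lemma dd_GG_bound: "\<bar>dd e (GG f)\<bar> \<le> 2 * S"
proof -
  have g: "\<bar>gam b a $ k / Ps$k\<bar> \<le> S" for a b k
  proof -
    have "\<bar>gam b a $ k / Ps$k\<bar> = \<bar>gam b a $ k\<bar> * (1 / Ps$k)" using pos by (simp add: abs_divide abs_of_pos)
    also have "\<dots> \<le> 1 * (1 / Ps$k)" by (rule mult_right_mono) (use pos in \<open>auto simp: gam_comp less_imp_le\<close>)
    also have "\<dots> \<le> S" using inv_le_S by simp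
    finally show ?thesis .
  qed
  have "\<bar>Dd Ps e (gam b a)\<bar> \<le> 2 * S" for a b
  proof -
    have "\<bar>Dd Ps e (gam b a)\<bar> \<le> \<bar>gam b a $ snd e / Ps$snd e\<bar> + \<bar>gam b a $ fst e / Ps$fst e\<bar>"
      unfolding Dd_def by (rule abs_triangle_ineq4)
    also have "\<dots> \<le> S + S" by (rule add_mono[OF g g])
    finally show ?thesis by simp
  qed
  note D = this
  have "dd e (GG f) = sg e * (sg f * Dd Ps e (gam (snd f) (fst f)))"
    unfolding dd_def GG_def Dd_def by (simp add: algebra_simps)
  then have "\<bar>dd e (GG f)\<bar> = \<bar>sg e\<bar> * (\<bar>sg f\<bar> * \<bar>Dd Ps e (gam (snd f) (fst f))\<bar>)"
    by (simp add: abs_mult)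
  also have "\<dots> \<le> 1 * (1 * (2 * S))"
    by (intro mult_mono sg_abs D) auto
  finally show ?thesis by simp
qed

lemma sum_x_GG: "e \<in> J \<Longrightarrow> (\<Sum>k\<in>UNIV. (X$k / Ps$k) * GG e $ k) = - dd e X"
proof -
  assume e: "e \<in> J"
  have "(\<Sum>k\<in>UNIV. (X$k / Ps$k) * GG e $ k) = sg e * (\<Sum>k\<in>UNIV. (X$k / Ps$k) * gam (snd e) (fst e) $ k)"
    unfolding GG_def by (simp add: sum_distrib_left algebra_simps)
  also have "\<dots> = sg e * (X$fst e / Ps$fst e - X$snd e / Ps$snd e)"
    using sum_gam[of "fst e" "snd e" "\<lambda>k. X$k / Ps$k"] ne e by simp
  also have "\<dots> = - dd e X" by (simp add: dd_def Dd_def algebra_simps)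
  finally show ?thesis .
qed

lemma Phi_deriv_val:
  "(\<Sum>k\<in>UNIV. 2 * (X$k) * (kolm_rhs J w Ps X $ k) / Ps$k) = - 2 * (\<Sum>e\<in>J. w e * (dd e X)^2)"
proof -
  have "(\<Sum>k\<in>UNIV. 2 * (X$k) * (kolm_rhs J w Ps X $ k) / Ps$k)
      = 2 * (\<Sum>k\<in>UNIV. \<Sum>e\<in>J. (w e * dd e X) * ((X$k / Ps$k) * GG e $ k))"
    unfolding kolm_GG by (simp add: sum_component sum_distrib_left sum_divide_distrib algebra_simps)
  also have "\<dots> = 2 * (\<Sum>e\<in>J. (w e * dd e X) * (\<Sum>k\<in>UNIV. (X$k / Ps$k) * GG e $ k))"
    by (simp add: sum.swap[of _ UNIV J] sum_distrib_left)
  also have "\<dots> = 2 * (\<Sum>e\<in>J. (w e * dd e X) * (- dd e X))"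
  proof -
    have "(\<Sum>e\<in>J. (w e * dd e X) * (\<Sum>k\<in>UNIV. (X$k / Ps$k) * GG e $ k)) = (\<Sum>e\<in>J. (w e * dd e X) * (- dd e X))"
      by (rule sum.cong[OF refl]) (simp only: sum_x_GG)
    then show ?thesis by (simp only:)
  qed
  also have "\<dots> = - 2 * (\<Sum>e\<in>J. w e * (dd e X)^2)"
    by (simp add: sum_negf power2_eq_square algebra_simps)
  finally show ?thesis .
qed

end


context kin begin

lemma finJ: "finite J" by simp

lemma S_pos: "S > 0"
proof -
  obtain k :: 'n where True by simp
  have "0 < 1 / Ps$k" using pos by simp
  then show ?thesis using inv_le_S[of k] by linarith
qed

lemma cont_dd: "continuous_on A P \<Longrightarrow> continuous_on A (\<lambda>u. dd e (P u))"
  unfolding dd_def Dd_def by (intro continuous_intros) (use pos in \<open>auto simp: less_imp_neq[symmetric]\<close>)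

context
  fixes w :: "'n \<times> 'n \<Rightarrow> real" and P :: "real \<Rightarrow> real^'n"
  assumes wpos: "\<forall>p\<in>J. w p \<ge> 0"
    and der: "\<forall>s\<ge>0. (P has_vector_derivative kolm_rhs J w Ps (P s)) (at s within {0..})"
begin

lemma P_cont: "continuous_on {0..} P"
  unfolding continuous_on_eq_continuous_within
proof
  fix x :: real assume "x \<in> {0..}"
  then have "(P has_vector_derivative kolm_rhs J w Ps (P x)) (at x within {0..})" using der by auto
  then show "continuous (at x within {0..}) P" by (rule has_vector_derivative_continuous)
qed

lemma der_ab: "0 \<le> a \<Longrightarrow> x \<in> {a..b} \<Longrightarrow> (P has_vector_derivative kolm_rhs J w Ps (P x)) (at x within {a..b})"
  by (rule has_vector_derivative_within_subset[of _ _ _ "{0..}"]) (use der in auto)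

lemma cont_ab: "0 \<le> a \<Longrightarrow> continuous_on {a..b} (\<lambda>u. w e * dd e (P u))"
  by (intro continuous_intros cont_dd continuous_on_subset[OF P_cont]) auto

lemma P_int:
  assumes "0 \<le> a" "a \<le> b"
  shows "P b - P a = (\<Sum>e\<in>J. integral {a..b} (\<lambda>u. w e * dd e (P u)) *\<^sub>R GG e)"
proof -
  have h1: "((\<lambda>u. kolm_rhs J w Ps (P u)) has_integral P b - P a) {a..b}"
    by (rule fundamental_theorem_of_calculus[OF assms(2)]) (rule der_ab[OF assms(1)])
  have h2: "((\<lambda>u. kolm_rhs J w Ps (P u)) has_integral (\<Sum>e\<in>J. integral {a..b} (\<lambda>u. w e * dd e (P u)) *\<^sub>R GG e)) {a..b}"
    unfolding kolm_GG
    by (intro has_integral_sum finJ has_integral_scaleR_left integrable_integral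
          integrable_continuous_interval cont_ab assms(1))
  show ?thesis using has_integral_unique[OF h1 h2] .
qed

lemma Phi_int:
  assumes "0 \<le> a" "a \<le> b"
  shows "((\<lambda>u. - 2 * (\<Sum>e\<in>J. w e * (dd e (P u))^2)) has_integral Phi Ps (P b) - Phi Ps (P a)) {a..b}"
proof (rule fundamental_theorem_of_calculus[OF assms(2)])
  fix x assume x: "x \<in> {a..b}"
  note dx = der_ab[OF assms(1) x]
  have dk: "((\<lambda>s. P s $ k) has_real_derivative kolm_rhs J w Ps (P x) $ k) (at x within {a..b})" for k
    unfolding has_real_derivative_iff_has_vector_derivative
    by (rule bounded_linear.has_vector_derivative[OF bounded_linear_vec_nth dx])
  have "((\<lambda>s. Phi Ps (P s)) has_real_derivative
          (\<Sum>k\<in>UNIV. 2 * (P x $ k) * (kolm_rhs J w Ps (P x) $ k) / Ps$k)) (at x within {a..b})"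
    unfolding Phi_def
  proof (rule DERIV_sum)
    fix k :: 'n
    show "((\<lambda>s. (P s $ k)^2 / Ps$k) has_real_derivative 2 * (P x $ k) * (kolm_rhs J w Ps (P x) $ k) / Ps$k) (at x within {a..b})"
      by (rule DERIV_cong[OF DERIV_cdivide[OF DERIV_power[OF dk]]]) (simp add: algebra_simps)
  qed
  then show "((\<lambda>s. Phi Ps (P s)) has_vector_derivative - 2 * (\<Sum>e\<in>J. w e * (dd e (P x))^2)) (at x within {a..b})"
    unfolding has_real_derivative_iff_has_vector_derivative[symmetric] Phi_deriv_val .
qed


lemma phi_sub:
  assumes P0: "P 0 = P0" and t: "0 \<le> t" and m: "0 < m" "\<forall>e\<in>J. m \<le> dd e P0"
    and PhiT: "Phi Ps (P t) > Phi Ps P0 - m^2 / (4 * S)"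
  shows "P t \<in> (\<lambda>q. P0 + q) ` QJ J P0 Ps"
proof -
  define T where "T = {s\<in>{0..t}. \<exists>e\<in>J. dd e (P s) \<le> m/2}"
  have contd: "continuous_on {0..t} (\<lambda>u. dd e (P u))" for e
    by (intro cont_dd continuous_on_subset[OF P_cont]) auto
  define c where "c b e = integral {0..b} (\<lambda>u. w e * dd e (P u))" for b e
  have cnn: "0 \<le> c b e" if "e \<in> J" "0 \<le> b" "\<forall>u\<in>{0..b}. dd e (P u) \<ge> 0" for b e
    unfolding c_def
    by (rule Henstock_Kurzweil_Integration.integral_nonneg[OF integrable_continuous_interval[OF cont_ab]])
       (use that wpos in auto)
  have Pc: "P b = P0 + (\<Sum>e\<in>J. c b e *\<^sub>R GG e)" if "0 \<le> b" for b
    using P_int[OF order_refl that] P0 unfolding c_def by (simp add: algebra_simps)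
  show ?thesis
  proof (cases "T = {}")
    case True
    have "\<forall>u\<in>{0..t}. dd e (P u) \<ge> 0" if "e \<in> J" for e
    proof
      fix u assume "u \<in> {0..t}"
      then have "\<not> dd e (P u) \<le> m/2" using True that unfolding T_def by auto
      then show "dd e (P u) \<ge> 0" using m by linarith
    qed
    then have "\<forall>p\<in>J. c t p \<ge> 0" using cnn t by blast
    then have "(\<Sum>e\<in>J. c t e *\<^sub>R GG e) \<in> QJ J P0 Ps" unfolding QJ_GG by blast
    then show ?thesis using Pc[OF t] by blast
  next
    case False
    have clT: "closed T"
    proof -
      have "T = (\<Union>e\<in>J. {0..t} \<inter> (\<lambda>s. dd e (P s)) -` {..m/2})" unfolding T_def by auto
      also have "closed \<dots>"
        by (intro closed_UN finJ ballI continuous_closed_preimage[OF contd] closed_atLeastAtMost closed_atMost)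
      finally show ?thesis .
    qed
    have bT: "bdd_below T" unfolding T_def by (rule bdd_belowI[of _ 0]) auto
    define \<tau> where "\<tau> = Inf T"
    have \<tau>T: "\<tau> \<in> T" unfolding \<tau>_def by (rule closed_contains_Inf[OF False bT clT])
    then have \<tau>0: "0 \<le> \<tau>" "\<tau> \<le> t" and ex: "\<exists>e\<in>J. dd e (P \<tau>) \<le> m/2" unfolding T_def by auto
    have below: "dd e (P u) > m/2" if "e \<in> J" "u \<in> {0..<\<tau>}" for e u
    proof (rule ccontr)
      assume "\<not> dd e (P u) > m/2"
      then have "dd e (P u) \<le> m/2" by simp
      then have "u \<in> T" using that \<tau>0 unfolding T_def by auto
      then have "\<tau> \<le> u" unfolding \<tau>_def by (rule cInf_lower[OF _ bT])
      then show False using that by auto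
    qed
    have \<tau>pos: "0 < \<tau>"
    proof (rule ccontr)
      assume "\<not> 0 < \<tau>"
      then have "\<tau> = 0" using \<tau>0 by auto
      then obtain e where "e \<in> J" "dd e P0 \<le> m/2" using ex P0 by auto
      then show False using m by force
    qed
    have ge: "dd e (P u) \<ge> m/2" if e: "e \<in> J" and u: "u \<in> {0..\<tau>}" for e u
    proof -
      define A where "A = {0..\<tau>} \<inter> (\<lambda>s. dd e (P s)) -` {m/2..}"
      have "closed A" unfolding A_def
        by (rule continuous_closed_preimage[OF continuous_on_subset[OF contd] closed_atLeastAtMost closed_atLeast])
          (use \<tau>0 in auto)
      moreover have "{0..<\<tau>} \<subseteq> A" unfolding A_def using below[OF e] by (auto simp: less_imp_le)
      ultimately have "closure {0..<\<tau>} \<subseteq> A" by (rule closure_minimal[rotated])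
      then have "{0..\<tau>} \<subseteq> A" using closure_atLeastLessThan[OF \<tau>pos] by simp
      then show ?thesis using u unfolding A_def by auto
    qed
    have cpos: "0 \<le> c \<tau> e" if "e \<in> J" for e
      using cnn[OF that \<tau>0(1)] ge[OF that] m by fastforce
    \<comment> \<open>energy decrease on [0,tau]\<close>
    have int1: "((\<lambda>u. - 2 * (\<Sum>e\<in>J. w e * (dd e (P u))^2)) has_integral Phi Ps (P \<tau>) - Phi Ps (P 0)) {0..\<tau>}"
      by (rule Phi_int[OF order_refl \<tau>0(1)])
    have int2: "((\<lambda>u. - (\<Sum>e\<in>J. m * (w e * dd e (P u)))) has_integral - (\<Sum>e\<in>J. m * c \<tau> e)) {0..\<tau>}"
      unfolding c_def
      by (intro has_integral_neg has_integral_sum finJ has_integral_mult_right integrable_integral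
          integrable_continuous_interval cont_ab order_refl)
    have "Phi Ps (P \<tau>) - Phi Ps (P 0) \<le> - (\<Sum>e\<in>J. m * c \<tau> e)"
    proof (rule has_integral_le[OF int1 int2])
      fix u assume u: "u \<in> {0..\<tau>}"
      have "(\<Sum>e\<in>J. m * (w e * dd e (P u))) \<le> (\<Sum>e\<in>J. 2 * (w e * (dd e (P u))^2))"
      proof (rule sum_mono)
        fix e assume e: "e \<in> J"
        have d: "m/2 \<le> dd e (P u)" by (rule ge[OF e u])
        have "0 \<le> w e * dd e (P u)" using wpos e d m by simp
        moreover have "0 \<le> 2 * dd e (P u) - m" using d by simp
        ultimately have "0 \<le> (w e * dd e (P u)) * (2 * dd e (P u) - m)" by simp
        then show "m * (w e * dd e (P u)) \<le> 2 * (w e * (dd e (P u))^2)"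
          by (simp add: power2_eq_square algebra_simps)
      qed
      moreover have "(\<Sum>e\<in>J. 2 * (w e * (dd e (P u))^2)) = 2 * (\<Sum>e\<in>J. w e * (dd e (P u))^2)"
        by (simp add: sum_distrib_left)
      ultimately show "- 2 * (\<Sum>e\<in>J. w e * (dd e (P u))^2) \<le> - (\<Sum>e\<in>J. m * (w e * dd e (P u)))"
        by linarith
    qed
    then have E1: "Phi Ps (P \<tau>) \<le> Phi Ps P0 - m * (\<Sum>e\<in>J. c \<tau> e)"
      using P0 by (simp add: sum_distrib_left)
    \<comment> \<open>the sum of coefficients is large\<close>
    obtain e where e: "e \<in> J" "dd e (P \<tau>) \<le> m/2" using ex by auto
    have "dd e (P \<tau>) = dd e P0 + (\<Sum>f\<in>J. c \<tau> f * dd e (GG f))"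
      using Pc[OF \<tau>0(1)] by (simp add: dd_lin)
    also have "\<dots> \<ge> m - (\<Sum>f\<in>J. c \<tau> f * (2 * S))"
    proof -
      have "(\<Sum>f\<in>J. - (c \<tau> f * (2 * S))) \<le> (\<Sum>f\<in>J. c \<tau> f * dd e (GG f))"
      proof (rule sum_mono)
        fix f assume f: "f \<in> J"
        have "- (2 * S) \<le> dd e (GG f)" using dd_GG_bound[of e f] by linarith
        then have "c \<tau> f * (- (2 * S)) \<le> c \<tau> f * dd e (GG f)"
          by (rule mult_left_mono) (rule cpos[OF f])
        then show "- (c \<tau> f * (2 * S)) \<le> c \<tau> f * dd e (GG f)" by simp
      qed
      moreover have "m \<le> dd e P0" using m(2) e(1) by blast
      ultimately show ?thesis by (simp add: sum_negf)
    qed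
    finally have A: "m - (\<Sum>f\<in>J. c \<tau> f * (2 * S)) \<le> dd e (P \<tau>)" .
    have "(\<Sum>f\<in>J. c \<tau> f * (2 * S)) = (\<Sum>f\<in>J. c \<tau> f) * (2 * S)" by (simp add: sum_distrib_right)
    then have "m - (\<Sum>f\<in>J. c \<tau> f) * (2 * S) \<le> m/2" using A e(2) by linarith
    then have big: "m / (4 * S) \<le> (\<Sum>f\<in>J. c \<tau> f)" using S_pos by (simp add: field_simps)
    have "m * (m / (4 * S)) \<le> m * (\<Sum>f\<in>J. c \<tau> f)" by (rule mult_left_mono[OF big]) (use m in simp)
    then have E2: "Phi Ps (P \<tau>) \<le> Phi Ps P0 - m^2 / (4 * S)" using E1 by (simp add: power2_eq_square)
    \<comment> \<open>energy does not increase on [tau,t]\<close>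
    have int3: "((\<lambda>u. - 2 * (\<Sum>e\<in>J. w e * (dd e (P u))^2)) has_integral Phi Ps (P t) - Phi Ps (P \<tau>)) {\<tau>..t}"
      by (rule Phi_int[OF \<tau>0(1) \<tau>0(2)])
    have "Phi Ps (P t) - Phi Ps (P \<tau>) \<le> 0"
    proof (rule has_integral_le[OF int3 has_integral_0])
      fix u assume "u \<in> {\<tau>..t}"
      have "0 \<le> (\<Sum>e\<in>J. w e * (dd e (P u))^2)" by (intro sum_nonneg) (use wpos in simp)
      then show "- 2 * (\<Sum>e\<in>J. w e * (dd e (P u))^2) \<le> 0" by simp
    qed
    then show ?thesis using E2 PhiT by linarith
  qed
qed

end
end


context kin begin

definition FF :: "real^('n\<times>'n) \<Rightarrow> real^'n \<Rightarrow> real^'n" where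
  "FF v = kolm_rhs J (\<lambda>p. v$p) Ps"

definition C1 where "C1 = 1 * (2 * S) * (\<Sum>e\<in>J. norm (gam (snd e) (fst e)))"

lemma C1_nn: "0 \<le> C1" unfolding C1_def using S_pos by (simp add: sum_nonneg)

lemma FF_bound: "\<forall>p. \<bar>v$p\<bar> \<le> 1 \<Longrightarrow> norm (FF v X) \<le> C1 * norm X"
  unfolding FF_def C1_def S_def by (rule kolm_bound[OF pos]) auto

lemma dd_norm: "\<bar>dd e X\<bar> \<le> 2 * S * norm X"
proof -
  have "\<bar>Dd Ps e X\<bar> \<le> \<bar>X$snd e / Ps$snd e\<bar> + \<bar>X$fst e / Ps$fst e\<bar>"
    unfolding Dd_def by (rule abs_triangle_ineq4)
  also have "\<dots> \<le> norm X * S + norm X * S"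
    unfolding S_def by (rule add_mono[OF comp_div_bound[OF pos] comp_div_bound[OF pos]])
  also have "\<dots> = 2 * S * norm X" by (simp add: algebra_simps)
  finally have "\<bar>Dd Ps e X\<bar> \<le> 2 * S * norm X" .
  then have "\<bar>sg e\<bar> * \<bar>Dd Ps e X\<bar> \<le> 1 * (2 * S * norm X)"
    by (intro mult_mono sg_abs) auto
  then show ?thesis unfolding dd_def abs_mult by simp
qed

lemma dd_diff: "dd e X - dd e Y = dd e (X - Y)"
  using dd_lin(1)[of e Y "X - Y"] by simp

lemma FF0: "FF 0 = (\<lambda>X. 0)"
  unfolding FF_def by (rule ext) (simp add: kolm_eq)

lemma Y0: "Yv (FF 0) P0 = P0"
proof -
  have "(\<Sum>n. ((\<lambda>X. 0::real^'n) ^^ n) P0 $ i / fact (Suc n)) = P0 $ i" for i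
  proof -
    define G where "G = (\<lambda>n. ((\<lambda>X. 0::real^'n) ^^ n) P0 $ i / fact (Suc n))"
    have G: "G (Suc n) = 0" for n unfolding G_def by simp
    have "summable G" unfolding G_def
      by (rule summ_iter1[of _ 0]) auto
    then have "(\<Sum>n. G (Suc n)) = suminf G - G 0" by (rule suminf_split_head)
    then have "suminf G = G 0" using G by simp
    then show ?thesis unfolding G_def by simp
  qed
  then show ?thesis unfolding Yv_def FF0 by (simp add: vec_eq_iff)
qed

lemma reach:
  assumes m: "0 < m" "\<forall>e\<in>J. m \<le> dd e P0"
  shows "\<exists>\<eta>>0. \<forall>c. (\<forall>e\<in>J. 0 \<le> c e \<and> c e \<le> \<eta>) \<longrightarrow> P0 + (\<Sum>e\<in>J. c e *\<^sub>R GG e) \<in> PhiJ J Ps P0"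
proof -
  define K1 :: "(real^('n\<times>'n)) set" where "K1 = cbox 0 (\<chi> _. 1)"
  have K1b: "\<forall>p. \<bar>v$p\<bar> \<le> 1" if "v \<in> K1" for v
  proof
    fix p
    have "0 \<le> v$p \<and> v$p \<le> 1" using that unfolding K1_def mem_box_cart by (cases p, simp)
    then show "\<bar>v$p\<bar> \<le> 1" by simp
  qed
  define Y where "Y v = Yv (FF v) P0" for v
  have contY: "continuous_on K1 Y" unfolding Y_def
  proof (rule Yv_cont[OF _ C1_nn])
    show "\<And>v x. v \<in> K1 \<Longrightarrow> norm (FF v x) \<le> C1 * norm x" using FF_bound K1b by blast
    show "\<And>g. continuous_on K1 g \<Longrightarrow> continuous_on K1 (\<lambda>v. FF v (g v))"
      unfolding FF_def by (rule kolm_cont[OF _ pos])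
  qed
  have "0 \<in> K1" unfolding K1_def mem_box_cart by simp
  moreover have "m / (4 * S) > 0" using m S_pos by simp
  moreover have "\<forall>x\<in>K1. \<forall>\<epsilon>>0. \<exists>\<delta>>0. \<forall>x'\<in>K1. dist x' x < \<delta> \<longrightarrow> dist (Y x') (Y x) < \<epsilon>"
    using contY unfolding continuous_on_iff .
  ultimately have "\<exists>\<delta>>0. \<forall>x'\<in>K1. dist x' 0 < \<delta> \<longrightarrow> dist (Y x') (Y 0) < m / (4 * S)" by blast
  then obtain \<delta> where \<delta>: "\<delta> > 0" "\<And>v. v \<in> K1 \<Longrightarrow> dist v 0 < \<delta> \<Longrightarrow> dist (Y v) (Y 0) < m / (4 * S)"
    by blast
  define N where "N = real CARD('n\<times>'n)"
  have "0 < CARD('n\<times>'n)" by (rule finite_UNIV_card_ge_0) simp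
  then have "(1::nat) \<le> CARD('n\<times>'n)" by linarith
  then have "real (1::nat) \<le> real CARD('n\<times>'n)" by (rule of_nat_mono)
  then have N: "N \<ge> 1" unfolding N_def by (simp only: of_nat_1)
  define \<beta> where "\<beta> = min 1 (\<delta> / (2 * N))"
  have \<beta>: "0 < \<beta>" "\<beta> \<le> 1" "\<beta> * N < \<delta>"
  proof -
    show "0 < \<beta>" "\<beta> \<le> 1" unfolding \<beta>_def using \<delta> N by auto
    have "\<beta> * N \<le> (\<delta> / (2 * N)) * N" unfolding \<beta>_def using N by (intro mult_right_mono) auto
    also have "\<dots> = \<delta> / 2" using N by simp
    finally show "\<beta> * N < \<delta>" using \<delta> by simp
  qed
  define B :: "(real^('n\<times>'n)) set" where "B = cbox 0 (\<chi> _. \<beta>)"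
  have Bmem: "\<forall>p. 0 \<le> v$p \<and> v$p \<le> \<beta>" if "v \<in> B" for v
    using that unfolding B_def mem_box_cart zero_index vec_lambda_beta .
  have Bsub: "B \<subseteq> K1"
  proof
    fix v assume "v \<in> B"
    then have "\<forall>p. 0 \<le> v$p \<and> v$p \<le> \<beta>" by (rule Bmem)
    then have "\<forall>p. 0 \<le> v$p \<and> v$p \<le> 1" using \<beta>(2) by (blast intro: order_trans)
    then show "v \<in> K1" unfolding K1_def mem_box_cart zero_index vec_lambda_beta .
  qed
  have Bnorm: "norm v < \<delta>" if "v \<in> B" for v
  proof -
    have "norm v \<le> (\<Sum>p\<in>UNIV. \<bar>v$p\<bar>)" by (rule norm_le_l1_cart)
    also have "\<dots> \<le> (\<Sum>p\<in>(UNIV::('n\<times>'n) set). \<beta>)"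
      by (rule sum_mono) (use Bmem[OF that] in auto)
    also have "\<dots> = \<beta> * N" unfolding N_def by simp
    finally show ?thesis using \<beta> by simp
  qed
  have ddY: "dd e (Y v) \<ge> m/2" if "v \<in> B" "e \<in> J" for v e
  proof -
    have "dist (Y v) P0 < m / (4 * S)" using \<delta>(2)[of v] Bsub Bnorm[OF that(1)] that(1) Y0
      unfolding Y_def by (auto simp: dist_norm)
    then have "norm (Y v - P0) < m / (4 * S)" by (simp add: dist_norm)
    then have "2 * S * norm (Y v - P0) < 2 * S * (m / (4 * S))"
      by (rule mult_strict_left_mono) (use S_pos in simp)
    also have "\<dots> = m / 2" using S_pos by simp
    finally have "\<bar>dd e (Y v) - dd e P0\<bar> < m/2" using dd_norm[of e "Y v - P0"] dd_diff by simp
    moreover have "m \<le> dd e P0" using m(2) that(2) by blast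
    ultimately show ?thesis by linarith
  qed
  define \<eta> where "\<eta> = \<beta> * m / 2"
  have "\<eta> > 0" unfolding \<eta>_def using \<beta> m by simp
  moreover have "P0 + (\<Sum>e\<in>J. c e *\<^sub>R GG e) \<in> PhiJ J Ps P0" if c: "\<forall>e\<in>J. 0 \<le> c e \<and> c e \<le> \<eta>" for c
  proof -
    define Tm where "Tm v = (\<chi> p. if p \<in> J then c p / dd p (Y v) else 0)" for v
    have contB: "continuous_on B Y" by (rule continuous_on_subset[OF contY Bsub])
    have "\<exists>v\<in>B. Tm v = v"
    proof (rule brouwer)
      show "compact B" "convex B" unfolding B_def by (rule compact_cbox, rule convex_box)
      have "(0::real^('n\<times>'n)) \<in> B" unfolding B_def mem_box_cart using \<beta> by simp
      then show "B \<noteq> {}" by blast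
      show "continuous_on B Tm" unfolding Tm_def
      proof (rule continuous_on_vec_lambda)
        fix p :: "'n \<times> 'n"
        show "continuous_on B (\<lambda>v. if p \<in> J then c p / dd p (Y v) else 0)"
        proof (cases "p \<in> J")
          case True
          have "continuous_on B (\<lambda>v. c p / dd p (Y v))"
            by (rule continuous_on_divide[OF continuous_on_const cont_dd[OF contB]])
               (use ddY[OF _ True] m in \<open>force simp: less_le_trans[of 0 "m/2"]\<close>)
          then show ?thesis using True by simp
        qed (simp add: continuous_on_const)
      qed
      show "Tm \<in> B \<rightarrow> B"
      proof
        fix v assume v: "v \<in> B"
        have "0 \<le> Tm v $ p \<and> Tm v $ p \<le> \<beta>" for p
        proof (cases "p \<in> J")
          case True
          have d: "dd p (Y v) \<ge> m/2" by (rule ddY[OF v True])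
          have dpos: "dd p (Y v) > 0" using d m by linarith
          have "c p / dd p (Y v) \<le> \<eta> / (m/2)"
            using c True d dpos m by (intro frac_le) auto
          also have "\<dots> = \<beta>" unfolding \<eta>_def using m by simp
          finally show ?thesis using True c dpos by (simp add: Tm_def)
        qed (use \<beta> in \<open>simp add: Tm_def\<close>)
        then show "Tm v \<in> B" unfolding B_def mem_box_cart zero_index vec_lambda_beta by blast
      qed
    qed blast
    then obtain v where v: "v \<in> B" "Tm v = v" by blast
    have vnn: "\<forall>p. 0 \<le> v$p" using Bmem[OF v(1)] by blast
    have vb: "\<forall>p. \<bar>v$p\<bar> \<le> 1" using K1b Bsub v(1) by blast
    have fix1: "v$p * dd p (Y v) = c p" if "p \<in> J" for p
    proof -
      have "v$p = Tm v $ p" using v(2) by simp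
      also have "\<dots> = c p / dd p (Y v)" using that by (simp add: Tm_def)
      finally have "v$p = c p / dd p (Y v)" .
      moreover have "dd p (Y v) > 0" using ddY[OF v(1) that] m by linarith
      ultimately show ?thesis by simp
    qed
    define Pt where "Pt = expv (FF v) P0"
    have lin: "linear (FF v)" unfolding FF_def by (rule kolm_linear)
    have bnd: "\<And>x. norm (FF v x) \<le> C1 * norm x" using FF_bound[OF vb] by blast
    have "Pt 1 = P0 + FF v (Y v)" unfolding Pt_def Y_def by (rule expv_1[OF lin bnd C1_nn])
    also have "FF v (Y v) = (\<Sum>e\<in>J. c e *\<^sub>R GG e)"
      unfolding FF_def kolm_GG by (rule sum.cong[OF refl]) (simp add: fix1)
    finally have P1: "Pt 1 = P0 + (\<Sum>e\<in>J. c e *\<^sub>R GG e)" .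
    show ?thesis unfolding PhiJ_def
    proof (intro CollectI exI conjI)
      show "\<forall>p\<in>J. 0 \<le> v $ p" using vnn by blast
      show "(0::real) < 1" by simp
      show "Pt 0 = P0" unfolding Pt_def by (rule expv_0)
      show "\<forall>s\<ge>0. (Pt has_vector_derivative kolm_rhs J (($) v) Ps (Pt s)) (at s within {0..})"
        using expv_deriv[OF lin bnd C1_nn] unfolding Pt_def FF_def by blast
      show "P0 + (\<Sum>e\<in>J. c e *\<^sub>R GG e) = Pt 1" using P1 by simp
    qed
  qed
  ultimately show ?thesis by blast
qed

end


theorem proposition1:
  fixes Ps P0 :: "real^'n::{finite,linorder}"
    and J :: "('n \<times> 'n) set"
  assumes "CARD('n) \<ge> 2"
    and "Ps \<in> simplex_pos"
    and "P0 \<in> simplex_pos"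
    and "\<forall>(i,j)\<in>J. j < i"
    and "\<forall>(i,j)\<in>J. P0$j / Ps$j - P0$i / Ps$i \<noteq> 0"
  shows "\<exists>U. open U \<and> P0 \<in> U \<and>
           ((\<lambda>q. P0 + q) ` QJ J P0 Ps) \<inter> U = PhiJ J Ps P0 \<inter> U"
proof -
  have pos: "\<forall>k. Ps$k > 0" using assms(2) unfolding simplex_pos_def by auto
  have ne: "\<forall>e\<in>J. fst e \<noteq> snd e" using assms(4) by auto
  have nz: "\<forall>e\<in>J. Dd Ps e P0 \<noteq> 0" using assms(5) unfolding Dd_def by auto
  interpret kin Ps P0 J using pos ne nz by unfold_locales
  define A where "A = insert 1 ((\<lambda>e. dd e P0) ` J)"
  define m where "m = Min A"
  have finA: "finite A" "A \<noteq> {}" unfolding A_def by auto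
  have "\<forall>a\<in>A. 0 < a" unfolding A_def using dd_P0 nz by auto
  then have m_pos: "0 < m" unfolding m_def using Min_gr_iff[OF finA] by blast
  have m_le: "\<forall>e\<in>J. m \<le> dd e P0" unfolding m_def A_def by (auto intro: Min_le)
  obtain \<eta> where \<eta>: "\<eta> > 0"
    and re: "\<And>c. (\<forall>e\<in>J. 0 \<le> c e \<and> c e \<le> \<eta>) \<Longrightarrow> P0 + (\<Sum>e\<in>J. c e *\<^sub>R GG e) \<in> PhiJ J Ps P0"
    using reach[OF m_pos m_le] by blast
  define ell where "ell X = (\<Sum>k\<in>UNIV. (P0$k / Ps$k) * (X$k - P0$k))" for X
  define U where "U = {X. Phi Ps P0 - m^2 / (4 * S) < Phi Ps X} \<inter> {X. - (m * \<eta>) < ell X}"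
  have "open U" unfolding U_def Phi_def ell_def
    by (intro open_Int open_Collect_less continuous_intros) (use pos in \<open>auto simp: less_imp_neq[symmetric]\<close>)
  moreover have "P0 \<in> U" unfolding U_def ell_def using m_pos \<eta> S_pos by simp
  moreover have "((\<lambda>q. P0 + q) ` QJ J P0 Ps) \<inter> U = PhiJ J Ps P0 \<inter> U"
  proof
    show "((\<lambda>q. P0 + q) ` QJ J P0 Ps) \<inter> U \<subseteq> PhiJ J Ps P0 \<inter> U"
    proof
      fix x assume x: "x \<in> ((\<lambda>q. P0 + q) ` QJ J P0 Ps) \<inter> U"
      then obtain c where c: "\<forall>p\<in>J. c p \<ge> 0" and xe: "x = P0 + (\<Sum>e\<in>J. c e *\<^sub>R GG e)"
        unfolding QJ_GG by blast
      have "ell x = (\<Sum>k\<in>UNIV. \<Sum>e\<in>J. c e * ((P0$k / Ps$k) * GG e $ k))"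
        unfolding ell_def xe by (simp add: sum_component sum_distrib_left algebra_simps)
      also have "\<dots> = (\<Sum>e\<in>J. c e * (\<Sum>k\<in>UNIV. (P0$k / Ps$k) * GG e $ k))"
        by (simp add: sum.swap[of _ UNIV J] sum_distrib_left)
      also have "\<dots> = (\<Sum>e\<in>J. c e * (- dd e P0))"
        by (rule sum.cong[OF refl]) (simp only: sum_x_GG)
      also have "\<dots> \<le> (\<Sum>e\<in>J. c e * (- m))"
        by (rule sum_mono) (use c m_le in \<open>auto intro: mult_left_mono\<close>)
      also have "\<dots> = - m * (\<Sum>e\<in>J. c e)" by (simp add: sum_distrib_left sum_negf algebra_simps)
      finally have "ell x \<le> - m * (\<Sum>e\<in>J. c e)" .
      moreover have "- (m * \<eta>) < ell x" using x unfolding U_def by blast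
      ultimately have "m * (\<Sum>e\<in>J. c e) < m * \<eta>" by linarith
      then have sl: "(\<Sum>e\<in>J. c e) < \<eta>" using m_pos by simp
      have "\<forall>e\<in>J. 0 \<le> c e \<and> c e \<le> \<eta>"
      proof
        fix e assume e: "e \<in> J"
        have "c e \<le> (\<Sum>e\<in>J. c e)" by (rule member_le_sum) (use c e in auto)
        then show "0 \<le> c e \<and> c e \<le> \<eta>" using sl c e by auto
      qed
      then have "x \<in> PhiJ J Ps P0" unfolding xe by (rule re)
      then show "x \<in> PhiJ J Ps P0 \<inter> U" using x by blast
    qed
    show "PhiJ J Ps P0 \<inter> U \<subseteq> ((\<lambda>q. P0 + q) ` QJ J P0 Ps) \<inter> U"
    proof
      fix x assume x: "x \<in> PhiJ J Ps P0 \<inter> U"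
      then obtain w Pt t where w: "\<forall>p\<in>J. w p \<ge> 0" and t: "t > 0" and P0: "Pt 0 = P0"
        and der: "\<forall>s\<ge>0. (Pt has_vector_derivative kolm_rhs J w Ps (Pt s)) (at s within {0..})"
        and xe: "x = Pt t" unfolding PhiJ_def by blast
      have "Phi Ps (Pt t) > Phi Ps P0 - m^2 / (4 * S)" using x xe unfolding U_def by blast
      then have "Pt t \<in> (\<lambda>q. P0 + q) ` QJ J P0 Ps"
        by (rule phi_sub[OF w der P0 less_imp_le[OF t] m_pos m_le])
      then show "x \<in> ((\<lambda>q. P0 + q) ` QJ J P0 Ps) \<inter> U" using x xe by blast
    qed
  qed
  ultimately show ?thesis by blast
qed


end
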